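(* Write \[ \frac{2q J_{10}^6}{J_{2,10}^2 J_{3,10}^2} = \sum_{n\ge 1} b'(n) q^n . \] Then $b'(n) \ge 2\lfloor (n-1)/6 \rfloor$ for all $n \ge 1$.
   Context: Notation: $(a;q)_\infty = \prod_{i\ge 0}(1-aq^i)$ and $(a_1,\dots,a_k;q)_\infty = (a_1;q)_\infty\cdots(a_k;q)_\infty$. For positive integers $a<b$: $J_b = (q^b;q^b)_\infty$ and $J_{a,b} = (q^a, q^{b-a}, q^b; q^b)_\infty$. *)

theory Defs
  imports "HOL-Computational_Algebra.Formal_Power_Series"
begin

definition qpoch_fin :: "nat \<Rightarrow> nat \<Rightarrow> nat \<Rightarrow> 'a::comm_ring_1 fps" where
  "qpoch_fin a b N = (\<Prod>i<N. 1 - fps_X ^ (a + b * i))"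

text \<open>Infinite product (q^a; q^b)_infinity for a, b >= 1: the n-th coefficient is already
  determined by the first n+1 factors, since factor i has q-exponent a + b*i >= i + 1.\<close>
definition qpoch :: "nat \<Rightarrow> nat \<Rightarrow> 'a::comm_ring_1 fps" where
  "qpoch a b = Abs_fps (\<lambda>n. fps_nth (qpoch_fin a b (Suc n)) n)"

definition J :: "nat \<Rightarrow> 'a::comm_ring_1 fps" where
  "J b = qpoch b b"

definition Jab :: "nat \<Rightarrow> nat \<Rightarrow> 'a::comm_ring_1 fps" where
  "Jab a b = qpoch a b * qpoch (b - a) b * qpoch b b"

definition bprime :: "nat \<Rightarrow> rat" where
  "bprime n = fps_nth (2 * fps_X * J 10 ^ 6 / (Jab 2 10 ^ 2 * Jab 3 10 ^ 2)) n"

end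

theory Submission imports Defs begin
unbundle fps_syntax



abbreviation X :: "rat fps" where "X \<equiv> fps_X"

definition nonneg :: "rat fps \<Rightarrow> bool" where "nonneg f = (\<forall>m. 0 \<le> f $ m)"
definition le :: "rat fps \<Rightarrow> rat fps \<Rightarrow> bool" where "le f g = (\<forall>m. f $ m \<le> g $ m)"
definition ge1 :: "rat fps \<Rightarrow> bool" where "ge1 f = (nonneg f \<and> le 1 f)"
definition iv :: "nat \<Rightarrow> rat fps" where "iv k = inverse (1 - X ^ k)"

lemma nonneg_mult: "nonneg f \<Longrightarrow> nonneg g \<Longrightarrow> nonneg (f * g)"
  unfolding nonneg_def fps_mult_nth by (auto intro!: sum_nonneg)

lemma nonneg_add: "nonneg f \<Longrightarrow> nonneg g \<Longrightarrow> nonneg (f + g)"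
  unfolding nonneg_def by auto

lemma le_trans': "le f g \<Longrightarrow> le g h \<Longrightarrow> le f h"
  unfolding le_def by (meson order_trans)

lemma le_refl': "le f f" unfolding le_def by auto

lemma le_nonneg: "le f g \<Longrightarrow> nonneg f \<Longrightarrow> nonneg g"
  unfolding le_def nonneg_def by (meson order_trans)

lemma le_mult: "le f' f \<Longrightarrow> le g' g \<Longrightarrow> nonneg f' \<Longrightarrow> nonneg g' \<Longrightarrow> le (f' * g') (f * g)"
proof -
  assume a: "le f' f" "le g' g" "nonneg f'" "nonneg g'"
  have n: "nonneg f" "nonneg g" using a le_nonneg by blast+
  show ?thesis unfolding le_def fps_mult_nth
  proof
    fix m show "(\<Sum>i = 0..m. f' $ i * g' $ (m - i)) \<le> (\<Sum>i = 0..m. f $ i * g $ (m - i))"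
      apply (rule sum_mono)
      apply (rule mult_mono)
      using a n unfolding le_def nonneg_def by auto
  qed
qed

lemma ge1_mult: "ge1 f \<Longrightarrow> ge1 g \<Longrightarrow> ge1 (f * g)"
  unfolding ge1_def using nonneg_mult le_mult[of 1 f 1 g]
  by (simp add: nonneg_def)

lemma ge1_prod: "(\<And>k. ge1 (f k)) \<Longrightarrow> ge1 (\<Prod>k<(N::nat). f k)"
proof (induction N)
  case 0 thus ?case by (auto simp: ge1_def nonneg_def le_def)
next
  case (Suc N) thus ?case by (simp add: ge1_mult)
qed

definition geo :: "nat \<Rightarrow> rat fps" where "geo k = Abs_fps (\<lambda>j. if k dvd j then 1 else 0)"

lemma geo_eq: assumes "k \<ge> 1" shows "iv k = geo k"
proof -
  have "(1 - X ^ k) * geo k = 1"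
  proof (rule fps_ext)
    fix m
    have "((1 - X ^ k) * geo k) $ m = geo k $ m - (X^k * geo k) $ m"
      by (simp add: algebra_simps)
    also have "\<dots> = (if m = 0 then 1 else 0)"
      using assms by (auto simp: fps_X_power_mult_nth geo_def dvd_minus_self)
    finally show "((1 - X ^ k) * geo k) $ m = 1 $ m" by simp
  qed
  thus ?thesis unfolding iv_def by (rule fps_inverse_unique)
qed

lemma iv_ge1: "k \<ge> 1 \<Longrightarrow> ge1 (iv k)"
  by (simp add: geo_eq ge1_def nonneg_def le_def geo_def)

lemma iv_mult: "k \<ge> 1 \<Longrightarrow> iv k * (1 - X ^ k) = 1"
  unfolding iv_def by (rule inverse_mult_eq_1) simp

lemma T_eq:
  assumes "a \<ge> 1" "b \<ge> 1" "m = a + b"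
  shows "(1 - X ^ m) * iv a * iv b = iv a + X ^ b * iv b"
proof -
  have 1: "iv a * (1 - X ^ a) = 1" "iv b * (1 - X ^ b) = 1" using assms iv_mult by auto
  have "iv a + X ^ b * iv b = iv a * (iv b * (1 - X ^ b)) + X ^ b * iv b * (iv a * (1 - X ^ a))"
    using 1 by simp
  also have "\<dots> = (1 - X ^ m) * iv a * iv b" using assms(3)
    by (simp add: algebra_simps power_add)
  finally show ?thesis by simp
qed

lemma T_le:
  assumes "a \<ge> 1" "b \<ge> 1" "m = a + b"
  shows "le (iv a) ((1 - X ^ m) * iv a * iv b)" "nonneg ((1 - X ^ m) * iv a * iv b)"
proof -
  have nb: "nonneg (X ^ b * iv b)" using iv_ge1[OF assms(2)]
    by (auto simp: ge1_def nonneg_def fps_X_power_mult_nth)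
  show "le (iv a) ((1 - X ^ m) * iv a * iv b)" unfolding T_eq[OF assms]
    using nb by (auto simp: le_def nonneg_def)
  show "nonneg ((1 - X ^ m) * iv a * iv b)" unfolding T_eq[OF assms]
    using nb iv_ge1[OF assms(1)] by (auto simp: ge1_def intro: nonneg_add)
qed

lemma T_ge1:
  assumes "a \<ge> 1" "b \<ge> 1" "m = a + b"
  shows "ge1 ((1 - X ^ m) * iv a * iv b)"
  using T_le[OF assms] iv_ge1[OF assms(1)] unfolding ge1_def using le_trans' by blast



definition agree :: "nat \<Rightarrow> rat fps \<Rightarrow> rat fps \<Rightarrow> bool" where
  "agree n f g = (\<forall>m\<le>n. f $ m = g $ m)"

lemma agree_mult: "agree n f f' \<Longrightarrow> agree n g g' \<Longrightarrow> agree n (f * g) (f' * g')"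
  unfolding agree_def fps_mult_nth by (auto intro!: sum.cong)

lemma agree_power: "agree n f f' \<Longrightarrow> agree n (f ^ k) (f' ^ k)"
proof (induction k)
  case 0 thus ?case by (simp add: agree_def)
next
  case (Suc k) thus ?case using agree_mult[OF Suc.prems Suc.IH] by simp
qed

lemma zero_upto_mult:
  fixes h u :: "rat fps"
  assumes "\<forall>j\<le>n. h $ j = 0"
  shows "\<forall>j\<le>n. (u * h) $ j = 0" "\<forall>j\<le>n. (h * u) $ j = 0"
  using assms unfolding fps_mult_nth by (auto intro!: sum.neutral)

lemma agree_inverse:
  assumes "agree n f g" "f $ 0 \<noteq> 0"
  shows "agree n (inverse f) (inverse g)"
proof -
  have g0: "g $ 0 \<noteq> 0" using assms unfolding agree_def by auto
  have e1: "g * inverse g = 1" by (rule inverse_mult_eq_1'[OF g0])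
  have e2: "inverse f * f = 1" by (rule inverse_mult_eq_1[OF assms(2)])
  have "inverse f * (g - f) * inverse g = inverse f * (g * inverse g) - (inverse f * f) * inverse g"
    by (simp only: right_diff_distrib left_diff_distrib mult.assoc)
  also have "\<dots> = inverse f - inverse g" by (simp only: e1 e2 mult_1_right mult_1_left)
  finally have eq: "inverse f - inverse g = inverse f * (g - f) * inverse g" by (rule sym)
  have "\<forall>j\<le>n. (g - f) $ j = 0" using assms unfolding agree_def by auto
  hence z: "\<forall>j\<le>n. (inverse f * (g - f) * inverse g) $ j = 0"
    using zero_upto_mult(1)[of n "g - f" "inverse f"] zero_upto_mult(2)[of n "inverse f * (g - f)" "inverse g"] by (metis)
  show ?thesis unfolding agree_def
  proof (intro allI impI)
    fix m assume "m \<le> n"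
    hence "(inverse f - inverse g) $ m = 0" using z `m \<le> n` unfolding eq by blast
    thus "inverse f $ m = inverse g $ m" by simp 
  qed
qed

lemma fin_step:
  assumes "a \<ge> 1" "m \<le> K" "b \<ge> 1"
  shows "(qpoch_fin a b (Suc K) :: rat fps) $ m = qpoch_fin a b K $ m"
proof -
  have "K \<le> b * K" using assms(3) by simp
  hence e: "m < a + b * K" using assms by linarith
  have "(qpoch_fin a b (Suc K) :: rat fps) = qpoch_fin a b K - X ^ (a + b * K) * qpoch_fin a b K"
  proof -
    have "(qpoch_fin a b (Suc K) :: rat fps) = qpoch_fin a b K * (1 - X ^ (a + b * K))"
      unfolding qpoch_fin_def by simp
    thus ?thesis by (simp add: right_diff_distrib mult.commute)
  qed
  thus ?thesis using e by (simp add: fps_X_power_mult_nth)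
qed


lemma fin_stable:
  assumes "a \<ge> 1" "b \<ge> 1" "m < L"
  shows "(qpoch_fin a b L :: rat fps) $ m = qpoch_fin a b (Suc m) $ m"
  using assms(3)
proof (induction L)
  case 0 thus ?case by simp
next
  case (Suc L)
  show ?case
  proof (cases "L = m")
    case True thus ?thesis by simp
  next
    case False
    hence "m < L" "m \<le> L" using Suc.prems by auto
    thus ?thesis using Suc.IH fin_step[OF assms(1) _ assms(2)] by simp
  qed
qed

lemma qpoch_agree:
  assumes "a \<ge> 1" "b \<ge> 1" "n < M"
  shows "agree n (qpoch a b) (qpoch_fin a b M)"
  unfolding agree_def
proof (intro allI impI)
  fix m assume "m \<le> n"
  hence "m < M" using assms by simp
  thus "qpoch a b $ m = (qpoch_fin a b M :: rat fps) $ m"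
    unfolding qpoch_def using fin_stable[OF assms(1,2) \<open>m < M\<close>] by simp
qed

lemma qpoch_fin0: "a \<ge> 1 \<Longrightarrow> (qpoch_fin a b M :: rat fps) $ 0 = 1"
  unfolding qpoch_fin_def by (induction M) auto

lemma qpoch0: "a \<ge> 1 \<Longrightarrow> (qpoch a b :: rat fps) $ 0 = 1"
  unfolding qpoch_def using qpoch_fin0 by simp

lemma inv_prod: "inverse (\<Prod>k<(M::nat). (1 - X ^ e k)) = (\<Prod>k<M. iv (e k))"
  unfolding iv_def by (induction M) (auto simp: fps_inverse_mult)

lemma prod_double: "(\<Prod>k<2 * (N::nat). f k) = (\<Prod>i<N. f (2 * i) * f (2 * i + 1) :: rat fps)"
  by (induction N) (auto simp: mult_ac)

lemma prod_add: "(\<Prod>k<a + (b::nat). f k) = (\<Prod>k<a. f k) * (\<Prod>k<b. f (a + k) :: rat fps)"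
  by (induction b) (auto simp: mult_ac)



lemma A_rec: "iv 2 * iv 3 = (1 + X^2 + X^4) * iv 3 + X^6 * (iv 2 * iv 3)"
proof -
  have h: "iv 2 * (1 - X^2) = 1" by (rule iv_mult) simp
  have "iv 2 * iv 3 * (1 - X^6) = (iv 2 * (1 - X^2)) * (1 + X^2 + X^4) * iv 3"
    by (simp add: algebra_simps power_add[symmetric])
  moreover have "iv 2 * iv 3 * (1 - X^6) = iv 2 * iv 3 - X^6 * (iv 2 * iv 3)"
    by (simp only: mult.commute[of "iv 2 * iv 3"] left_diff_distrib mult_1_left)
  ultimately have "iv 2 * iv 3 - X^6 * (iv 2 * iv 3) = (1 + X^2 + X^4) * iv 3"
    unfolding h by simp
  thus ?thesis by (simp only: diff_eq_eq)
qed

lemma C_ge: assumes "j \<ge> 6" shows "((1 + X^2 + X^4) * iv 3) $ j \<ge> 1"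
proof -
  have "((1 + X^2 + X^4) * iv 3) $ j = iv 3 $ j + (X^2 * iv 3) $ j + (X^4 * iv 3) $ j"
    by (simp add: algebra_simps)
  also have "\<dots> = geo 3 $ j + geo 3 $ (j - 2) + geo 3 $ (j - 4)"
    using assms by (simp add: geo_eq fps_X_power_mult_nth)
  also have "\<dots> \<ge> 1"
  proof -
    have "3 dvd j \<or> 3 dvd (j - 2) \<or> 3 dvd (j - 4)" using assms by presburger
    thus ?thesis by (auto simp: geo_def)
  qed
  finally show ?thesis .
qed

lemma A_bound: "of_nat (m div 6) \<le> (iv 2 * iv 3) $ m"
proof (induction m rule: less_induct)
  case (less m)
  have nn: "nonneg (iv 2 * iv 3)" using iv_ge1[of 2] iv_ge1[of 3] nonneg_mult
    by (simp add: ge1_def)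
  show ?case
  proof (cases "m < 6")
    case True thus ?thesis using nn by (simp add: nonneg_def)
  next
    case False
    have "(iv 2 * iv 3) $ m = ((1 + X^2 + X^4) * iv 3) $ m + (iv 2 * iv 3) $ (m - 6)"
      using False by (subst A_rec) (simp add: fps_X_power_mult_nth)
    moreover have "of_nat ((m - 6) div 6) \<le> (iv 2 * iv 3) $ (m - 6)"
      using less.IH False by simp
    moreover have "m div 6 = Suc ((m - 6) div 6)" using False by (simp add: div_if)
    ultimately show ?thesis using C_ge[of m] False by simp
  qed
qed



lemma invD: "inverse (qpoch_fin c 10 M :: rat fps) = (\<Prod>k<M. iv (c + 10 * k))"
  unfolding qpoch_fin_def using inv_prod[of "\<lambda>k. c + 10 * k" M] by simp

lemma G_eq:
  fixes N :: nat
  assumes "N \<ge> 1"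
  defines "jf \<equiv> (\<lambda>k. 1 - X ^ (10 + 10 * k))"
  defines "v \<equiv> (\<lambda>c k. iv (c + 10 * k))"
  shows "(qpoch_fin 10 10 (2*N) :: rat fps) * inverse (qpoch_fin 2 10 (2*N)) * inverse (qpoch_fin 3 10 (2*N))
           * inverse (qpoch_fin 7 10 (2*N)) * inverse (qpoch_fin 8 10 (2*N))
    = (\<Prod>i<N. (jf (2*i) * v 2 i * v 8 i) * (jf (2*i+1) * v 3 i * v 7 (Suc i))) * iv 7 *
      ((\<Prod>k<N. v 2 (N+k)) * (\<Prod>k<N. v 3 (N+k)) * (\<Prod>k<N. v 8 (N+k)) * (\<Prod>k<N-1. v 7 (Suc (N+k))))"
proof -
  have J: "(qpoch_fin 10 10 (2*N) :: rat fps) = (\<Prod>i<N. jf (2*i) * jf (2*i+1))"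
    unfolding qpoch_fin_def jf_def using prod_double[of "\<lambda>k. 1 - X ^ (10 + 10 * k)" N] by simp
  have D: "inverse (qpoch_fin c 10 (2*N) :: rat fps) = (\<Prod>k<N. v c k) * (\<Prod>k<N. v c (N+k))" for c
    unfolding invD v_def using prod_add[of "\<lambda>k. iv (c + 10 * k)" N N] by (simp add: mult_2)
  have "2 * N = Suc (N + (N - 1))" using assms by simp
  hence D7: "inverse (qpoch_fin 7 10 (2*N) :: rat fps) = iv 7 * (\<Prod>k<N. v 7 (Suc k)) * (\<Prod>k<N-1. v 7 (Suc (N+k)))"
    unfolding invD using prod.lessThan_Suc_shift[of "\<lambda>k. v 7 k" "N + (N - 1)"]
      prod_add[of "\<lambda>k. v 7 (Suc k)" N "N - 1"]
    by (simp add: v_def mult.assoc mult_2)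
  show ?thesis unfolding J D7 D[of 2] D[of 3] D[of 8] prod.distrib
    by (simp only: mult_ac)
qed


lemma G_bound:
  fixes N :: nat
  assumes "N \<ge> 1"
  defines "jf \<equiv> (\<lambda>k. 1 - X ^ (10 + 10 * k))"
  defines "v \<equiv> (\<lambda>c k. iv (c + 10 * k))"
  defines "F \<equiv> (\<lambda>i. (jf (2*i) * v 2 i * v 8 i) * (jf (2*i+1) * v 3 i * v 7 (Suc i)))"
  defines "R \<equiv> (\<Prod>k<N. v 2 (N+k)) * (\<Prod>k<N. v 3 (N+k)) * (\<Prod>k<N. v 8 (N+k)) * (\<Prod>k<N-1. v 7 (Suc (N+k)))"
  shows "le (iv 2 * iv 3) ((\<Prod>i<N. F i) * iv 7 * R)"
proof -
  have T1: "ge1 (jf (2*i) * v 2 i * v 8 i)" for i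
    unfolding jf_def v_def by (rule T_ge1) auto
  have T2: "ge1 (jf (2*i+1) * v 3 i * v 7 (Suc i))" for i
    unfolding jf_def v_def by (rule T_ge1) auto
  have Fg: "ge1 (F i)" for i unfolding F_def using T1 T2 ge1_mult by blast
  have F0: "le (iv 2 * iv 3) (F 0)"
  proof -
    have a: "le (iv 2) (jf 0 * v 2 0 * v 8 0)" unfolding jf_def v_def
      using T_le(1)[of 2 8 10] by simp
    have b: "le (iv 3) (jf 1 * v 3 0 * v 7 1)" unfolding jf_def v_def
      using T_le(1)[of 3 17 20] by simp
    show ?thesis unfolding F_def using le_mult[OF a b] iv_ge1[of 2] iv_ge1[of 3]
      by (simp add: ge1_def)
  qed
  obtain n where N: "N = Suc n" using assms by (cases N) auto
  have P: "(\<Prod>i<N. F i) = F 0 * (\<Prod>i<n. F (Suc i))"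
    unfolding N by (rule prod.lessThan_Suc_shift)
  have rest: "ge1 (\<Prod>i<n. F (Suc i))" by (rule ge1_prod) (rule Fg)
  have Rg: "ge1 R" unfolding R_def v_def
    by (intro ge1_mult ge1_prod iv_ge1) auto
  have nA: "nonneg (iv 2 * iv 3)" using iv_ge1[of 2] iv_ge1[of 3] nonneg_mult by (simp add: ge1_def)
  have n1: "nonneg 1" by (simp add: nonneg_def)
  have s1: "le (iv 2 * iv 3 * 1) (F 0 * (\<Prod>i<n. F (Suc i)))"
    using le_mult[OF F0 _ nA n1] rest by (simp add: ge1_def)
  have s2: "le (iv 2 * iv 3 * 1 * 1) (F 0 * (\<Prod>i<n. F (Suc i)) * iv 7)"
    using le_mult[OF s1 _ _ n1] iv_ge1[of 7] nA by (simp add: ge1_def)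
  have s3: "le (iv 2 * iv 3 * 1 * 1 * 1) (F 0 * (\<Prod>i<n. F (Suc i)) * iv 7 * R)"
    using le_mult[OF s2 _ _ n1] Rg nA by (simp add: ge1_def)
  thus ?thesis unfolding P by simp
qed



lemma agree_refl: "agree n f f" by (simp add: agree_def)

theorem mainTheorem5:
  fixes n :: nat
  assumes "n \<ge> 1"
  shows "bprime n \<ge> 2 * of_int \<lfloor>(of_nat n - 1) / (6::rat)\<rfloor>"
proof -
  define N where "N = Suc n"
  define M where "M = 2 * N"
  have nM: "n < M" unfolding M_def N_def by simp
  define Jf :: "rat fps" where "Jf = qpoch_fin 10 10 M"
  define d :: "nat \<Rightarrow> rat fps" where "d c = qpoch_fin c 10 M" for c
  have ag: "agree n (qpoch c 10) (d c)" if "c \<ge> 1" for c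
    unfolding d_def using qpoch_agree[OF that _ nM] by simp
  have agJ: "agree n (qpoch 10 10) Jf" unfolding Jf_def using qpoch_agree[OF _ _ nM] by simp
  have Jab2: "(Jab 2 10 :: rat fps) = qpoch 2 10 * qpoch 8 10 * qpoch 10 10" by (simp add: Jab_def)
  have Jab3: "(Jab 3 10 :: rat fps) = qpoch 3 10 * qpoch 7 10 * qpoch 10 10" by (simp add: Jab_def)
  define den :: "rat fps" where "den = Jab 2 10 ^ 2 * Jab 3 10 ^ 2"
  have den0: "den $ 0 = 1" unfolding den_def Jab2 Jab3 by (simp add: qpoch0 fps_mult_nth_0 power2_eq_square)
  define denf where "denf = (d 2 * d 8 * Jf) ^ 2 * (d 3 * d 7 * Jf) ^ 2"
  have agden: "agree n den denf" unfolding den_def denf_def Jab2 Jab3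
    by (intro agree_mult agree_power ag agJ) auto
  have bp: "bprime n = (2 * X * J 10 ^ 6 * inverse den) $ n"
    unfolding bprime_def den_def[symmetric] using den0 by (simp add: fps_divide_unit)
  have ag2: "agree n (2 * X * J 10 ^ 6 * inverse den) (2 * X * Jf ^ 6 * inverse denf)"
    unfolding J_def by (intro agree_mult agree_power agree_refl agJ agree_inverse agden) (simp add: den0)
  define G where "G = Jf * inverse (d 2) * inverse (d 3) * inverse (d 7) * inverse (d 8)"
  have Jf0: "Jf $ 0 = 1" unfolding Jf_def by (simp add: qpoch_fin0)
  have JU: "Jf * inverse Jf = 1" using Jf0 by (intro inverse_mult_eq_1') simp
  have "Jf ^ 6 * inverse denf = Jf ^ 6 * ((inverse (d 2) * inverse (d 8) * inverse Jf) ^ 2 * (inverse (d 3) * inverse (d 7) * inverse Jf) ^ 2)"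
    unfolding denf_def by (simp add: fps_inverse_mult fps_inverse_power)
  also have "\<dots> = G * G * (Jf * inverse Jf) ^ 4" unfolding G_def by algebra
  finally have Qf: "2 * X * Jf ^ 6 * inverse denf = 2 * X * (G * G)" unfolding JU by (simp add: mult.assoc)
  have bp2: "bprime n = 2 * (G * G) $ (n - 1)"
  proof -
    have "bprime n = (2 * X * Jf ^ 6 * inverse denf) $ n" using bp ag2 unfolding agree_def by simp
    also have "\<dots> = (fps_const 2 * (X * (G * G))) $ n" unfolding Qf by (simp add: fps_numeral_fps_const mult.assoc)
    finally show ?thesis using assms by simp
  qed
  have GA: "le (iv 2 * iv 3) G"
  proof -
    have "G = qpoch_fin 10 10 (2*N) * inverse (qpoch_fin 2 10 (2*N)) * inverse (qpoch_fin 3 10 (2*N))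
           * inverse (qpoch_fin 7 10 (2*N)) * inverse (qpoch_fin 8 10 (2*N))"
      unfolding G_def Jf_def d_def M_def ..
    also note G_eq[of N]
    finally show ?thesis using G_bound[of N] unfolding N_def by simp
  qed
  have gA: "ge1 (iv 2 * iv 3)" using iv_ge1[of 2] iv_ge1[of 3] ge1_mult by simp
  have "le (iv 2 * iv 3 * 1) (G * G)"
  proof -
    have h1: "le 1 (iv 2 * iv 3)" "nonneg (iv 2 * iv 3)" using gA by (auto simp: ge1_def)
    have n1: "nonneg 1" by (simp add: nonneg_def)
    show ?thesis using le_mult[OF GA le_trans'[OF h1(1) GA] h1(2) n1] .
  qed
  hence "le (iv 2 * iv 3) (G * G)" by (simp only: mult_1_right)
  hence "(iv 2 * iv 3) $ (n - 1) \<le> (G * G) $ (n - 1)" unfolding le_def by blast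
  with A_bound[of "n - 1"] have "of_nat ((n - 1) div 6) \<le> (G * G) $ (n - 1)" by linarith
  moreover have "\<lfloor>(of_nat n - 1) / (6::rat)\<rfloor> = int ((n - 1) div 6)"
  proof -
    have e: "(of_nat n - 1) / (6::rat) = of_nat (n - 1) / of_nat 6" using assms by (simp add: of_nat_diff)
    show ?thesis by (simp only: e floor_divide_of_nat_eq)
  qed
  ultimately show ?thesis unfolding bp2 by (simp only: of_int_of_nat_eq)
qed

end
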